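(* Assume $u=(u_1,\dots,u_n)$ has positive entries linearly independent over $\mathbb{Q}$. Consider the formal power series in $\hbar$ $$V(t,\hbar)=\sum_{|r|\ge1}\hbar^{|r|-1}c_r(\hbar)\Big(\frac1tD_\theta\Big)^r\frac{e^{\frac{it}{2}\sum_j\theta_j}}{\prod_j(1-e^{it\theta_j})}\Bigg|_{\theta=u},$$ where $c_r(\hbar)=\sum_{i\ge0}c_{r,i}\hbar^{|r|-1+i}$. Then for every $\ell\ge0$, the coefficients of $\hbar^s$, $s\le\ell$, in $V(t,\hbar)$ (as functions of $t$) determine the coefficients of $\hbar^s$, $s\le \ell$, in $c_r(\hbar)$ for all $r$.
   Context: $r$ ranges over multi-indices in $\mathbb{Z}_{\ge0}^n$, $|r|=\sum r_j$, $D_\theta=-i(\partial_{\theta_1},\dots,\partial_{\theta_n})$. The $c_r(\hbar)$ are the coefficients of the semi-classical Birkhoff canonical form $F$ (Taylor series $\sum_{|r|\ge1}c_r(\hbar)p^r$). *)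

theory Defs
  imports "HOL-Analysis.Analysis"
begin

text \<open>Points theta of R^n are functions nat => real (coordinates 0..n-1);
  multi-indices r are functions nat => nat supported in {..<n}.\<close>

definition multi_indices :: "nat \<Rightarrow> (nat \<Rightarrow> nat) set" where
  "multi_indices n = {r. \<forall>j\<ge>n. r j = 0}"

definition mabs :: "nat \<Rightarrow> (nat \<Rightarrow> nat) \<Rightarrow> nat" where
  "mabs n r = (\<Sum>j<n. r j)"

definition partial :: "nat \<Rightarrow> ((nat \<Rightarrow> real) \<Rightarrow> complex) \<Rightarrow> (nat \<Rightarrow> real) \<Rightarrow> complex" where
  "partial j f \<theta> = vector_derivative (\<lambda>s. f (\<theta>(j := s))) (at (\<theta> j))"

definition Dpow :: "nat \<Rightarrow> (nat \<Rightarrow> nat) \<Rightarrow> ((nat \<Rightarrow> real) \<Rightarrow> complex) \<Rightarrow> (nat \<Rightarrow> real) \<Rightarrow> complex" where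
  "Dpow n r f = foldr (\<lambda>j g. ((\<lambda>h \<theta>. - \<i> * partial j h \<theta>) ^^ (r j)) g) [0..<n] f"

definition Gfun :: "nat \<Rightarrow> real \<Rightarrow> (nat \<Rightarrow> real) \<Rightarrow> complex" where
  "Gfun n t \<theta> = exp (\<i> * complex_of_real (t / 2 * (\<Sum>j<n. \<theta> j)))
      / (\<Prod>j<n. (1 - exp (\<i> * complex_of_real (t * \<theta> j))))"

definition fterm :: "nat \<Rightarrow> (nat \<Rightarrow> real) \<Rightarrow> (nat \<Rightarrow> nat) \<Rightarrow> real \<Rightarrow> complex" where
  "fterm n u r t = (1 / complex_of_real t) ^ mabs n r * Dpow n r (Gfun n t) u"

definition tdom :: "nat \<Rightarrow> (nat \<Rightarrow> real) \<Rightarrow> real set" where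
  "tdom n u = {t. t \<noteq> 0 \<and> (\<forall>j<n. exp (\<i> * complex_of_real (t * u j)) \<noteq> 1)}"

text \<open>Coefficients: c r i is the coefficient c_{r,i} of hbar^{|r|-1+i} in c_r(hbar).
  Coefficient of hbar^s in V(t,hbar): sum over r, i with |r|-1+i = s.\<close>
definition Vcoef :: "nat \<Rightarrow> (nat \<Rightarrow> real) \<Rightarrow> ((nat \<Rightarrow> nat) \<Rightarrow> nat \<Rightarrow> real) \<Rightarrow> nat \<Rightarrow> real \<Rightarrow> complex" where
  "Vcoef n u c s t = (\<Sum>r\<in>{r\<in>multi_indices n. 1 \<le> mabs n r \<and> mabs n r \<le> s + 1}.
      complex_of_real (c r (s + 1 - mabs n r)) * fterm n u r t)"

definition rat_lin_indep :: "nat \<Rightarrow> (nat \<Rightarrow> real) \<Rightarrow> bool" where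
  "rat_lin_indep n u \<longleftrightarrow>
     (\<forall>q :: nat \<Rightarrow> rat. (\<Sum>j<n. real_of_rat (q j) * u j) = 0 \<longrightarrow> (\<forall>j<n. q j = 0))"

end

theory Submission
  imports Defs
begin


primrec Qp :: "nat \<Rightarrow> complex poly" where
  "Qp 0 = 1"
| "Qp (Suc k) = smult \<i> (smult (1/2) ([:1,-1:] * Qp k) + [:0,1,-1:] * pderiv (Qp k)
      + smult (of_nat (Suc k)) ([:0,1:] * Qp k))"

definition Phi :: "nat \<Rightarrow> complex \<Rightarrow> complex" where
  "Phi k z = exp (\<i> * z / 2) * poly (Qp k) (exp (\<i> * z)) / (1 - exp (\<i> * z)) ^ Suc k"

lemma Phi_deriv:
  assumes "exp (\<i> * z) \<noteq> 1"
  shows "(Phi k has_field_derivative Phi (Suc k) z) (at z)"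
proof -
  define w where "w = exp (\<i> * z)"
  define E where "E = exp (\<i> * z / 2)"
  have D: "1 - w \<noteq> 0" using assms w_def by auto
  have e1: "((\<lambda>z. exp (\<i> * z / 2)) has_field_derivative (\<i>/2 * E)) (at z)"
    unfolding E_def by (auto intro!: derivative_eq_intros)
  have e2: "((\<lambda>z. exp (\<i> * z)) has_field_derivative (\<i> * w)) (at z)"
    unfolding w_def by (auto intro!: derivative_eq_intros)
  have e3: "((\<lambda>z. poly (Qp k) (exp (\<i> * z))) has_field_derivative (poly (pderiv (Qp k)) w * (\<i> * w))) (at z)"
    using DERIV_chain2[OF poly_DERIV e2] unfolding w_def by simp
  have e4: "((\<lambda>z. (1 - exp (\<i> * z)) ^ Suc k) has_field_derivative (of_nat (Suc k) * (1 - w) ^ k * (- (\<i> * w)))) (at z)"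
    using DERIV_power[OF DERIV_diff[OF DERIV_const[of 1] e2], where n="Suc k"] unfolding w_def by (simp add: mult.commute mult.left_commute)
  note e5 = DERIV_divide[OF DERIV_mult[OF e1 e3] e4]
  have EE: "E * E = w" unfolding E_def w_def by (simp flip: exp_add)
  have Dk: "(1 - w) ^ k \<noteq> 0" using D by simp
  have Q: "poly (Qp (Suc k)) w = \<i> * ((1/2) * (1 - w) * poly (Qp k) w + w * (1 - w) * poly (pderiv (Qp k)) w
      + of_nat (Suc k) * w * poly (Qp k) w)"
    by (simp add: algebra_simps add_divide_distrib[symmetric] diff_divide_distrib[symmetric])
  define q where "q = poly (Qp k) w"
  define q' where "q' = poly (pderiv (Qp k)) w"
  have s1: "((\<i>/2*E*q + q'*(\<i>*w)*E) * (1-w)^Suc k - E*q*(of_nat (Suc k)*(1-w)^k*(-(\<i>*w)))) / ((1-w)^Suc k*(1-w)^Suc k)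
     = ((\<i>/2*E*q + q'*(\<i>*w)*E) * (1-w) - E*q*(of_nat (Suc k)*(-(\<i>*w)))) / (1-w)^Suc(Suc k)"
    using D Dk by (simp add: divide_simps) (simp add: algebra_simps)
  have s2: "((\<i>/2*E*q + q'*(\<i>*w)*E) * (1-w) - E*q*(of_nat (Suc k)*(-(\<i>*w)))) = E * poly (Qp (Suc k)) w"
    unfolding Q q_def q'_def by (simp add: algebra_simps)
  show ?thesis unfolding Phi_def[abs_def]
    apply (rule DERIV_cong[OF e5])
    using D apply (simp add: w_def)
    using s1 s2 unfolding q_def q'_def w_def E_def by (simp add: mult.commute mult.left_commute)
qed
lemma psi_vd:
  assumes "exp (\<i> * complex_of_real (t * s)) \<noteq> 1"
  shows "((\<lambda>s. Phi k (complex_of_real (t * s))) has_vector_derivative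
           (complex_of_real t * Phi (Suc k) (complex_of_real (t * s)))) (at s)"
proof -
  have f: "((\<lambda>s. complex_of_real (t * s)) has_vector_derivative complex_of_real t) (at s)"
    by (auto intro!: derivative_eq_intros has_vector_derivative_of_real)
  from field_vector_diff_chain_at[OF f Phi_deriv[OF assms]] show ?thesis by (simp add: o_def)
qed

definition Pm :: "nat \<Rightarrow> real \<Rightarrow> (nat \<Rightarrow> nat) \<Rightarrow> (nat \<Rightarrow> real) \<Rightarrow> complex" where
  "Pm n t m \<theta> = (\<Prod>j<n. (- \<i>) ^ m j * complex_of_real t ^ m j * Phi (m j) (complex_of_real (t * \<theta> j)))"

definition Sd :: "nat \<Rightarrow> real \<Rightarrow> (nat \<Rightarrow> real) set" where
  "Sd n t = {\<theta>. \<forall>j<n. exp (\<i> * complex_of_real (t * \<theta> j)) \<noteq> 1}"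

lemma Pm_split:
  assumes "j < n"
  shows "Pm n t m \<theta> = ((- \<i>) ^ m j * complex_of_real t ^ m j * Phi (m j) (complex_of_real (t * \<theta> j)))
     * (\<Prod>i\<in>{..<n}-{j}. (- \<i>) ^ m i * complex_of_real t ^ m i * Phi (m i) (complex_of_real (t * \<theta> i)))"
  unfolding Pm_def using assms by (subst prod.remove[of _ j]) auto

lemma step:
  assumes j: "j < n" and F: "\<forall>\<theta>\<in>Sd n t. F \<theta> = Pm n t m \<theta>"
  shows "\<forall>\<theta>\<in>Sd n t. - \<i> * partial j F \<theta> = Pm n t (m(j := Suc (m j))) \<theta>"
proof
  fix \<theta> assume th: "\<theta> \<in> Sd n t"
  define U where "U = {s. exp (\<i> * complex_of_real (t * s)) \<noteq> 1}"
  have oU: "open U" unfolding U_def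
    by (rule open_Collect_neq) (auto intro!: continuous_intros)
  have jU: "\<theta> j \<in> U" using th j unfolding U_def Sd_def by auto
  define C where "C = (\<Prod>i\<in>{..<n}-{j}. (- \<i>) ^ m i * complex_of_real t ^ m i * Phi (m i) (complex_of_real (t * \<theta> i)))"
  define K where "K = (- \<i>) ^ m j * complex_of_real t ^ m j"
  have eq: "F (\<theta>(j := s)) = C * (K * Phi (m j) (complex_of_real (t * s)))" if "s \<in> U" for s
  proof -
    have "\<theta>(j := s) \<in> Sd n t" using th that unfolding Sd_def U_def by auto
    then have "F (\<theta>(j := s)) = Pm n t m (\<theta>(j := s))" using F by auto
    also have "\<dots> = C * (K * Phi (m j) (complex_of_real (t * s)))"
      unfolding Pm_split[OF j] C_def K_def by (simp add: mult_ac)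
    finally show ?thesis .
  qed
  have d: "((\<lambda>s. C * (K * Phi (m j) (complex_of_real (t * s)))) has_vector_derivative
      C * (K * (complex_of_real t * Phi (Suc (m j)) (complex_of_real (t * \<theta> j))))) (at (\<theta> j))"
    using psi_vd[of t "\<theta> j" "m j"] jU unfolding U_def
    by (intro has_vector_derivative_mult_right) auto
  have d2: "((\<lambda>s. F (\<theta>(j := s))) has_vector_derivative
      C * (K * (complex_of_real t * Phi (Suc (m j)) (complex_of_real (t * \<theta> j))))) (at (\<theta> j))"
    by (rule has_vector_derivative_transform_within_open[OF d oU jU]) (simp add: eq)
  have "partial j F \<theta> = C * (K * (complex_of_real t * Phi (Suc (m j)) (complex_of_real (t * \<theta> j))))"
    unfolding partial_def using vector_derivative_at[OF d2] by simp
  then show "- \<i> * partial j F \<theta> = Pm n t (m(j := Suc (m j))) \<theta>"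
    unfolding Pm_split[OF j] C_def K_def by (simp add: mult_ac)
qed

lemma stepk:
  assumes j: "j < n" and F: "\<forall>\<theta>\<in>Sd n t. F \<theta> = Pm n t m \<theta>"
  shows "\<forall>\<theta>\<in>Sd n t. (((\<lambda>h \<theta>. - \<i> * partial j h \<theta>) ^^ k) F) \<theta> = Pm n t (m(j := m j + k)) \<theta>"
proof (induction k)
  case 0
  then show ?case using F by simp
next
  case (Suc k)
  have "\<forall>\<theta>\<in>Sd n t. - \<i> * partial j (((\<lambda>h \<theta>. - \<i> * partial j h \<theta>) ^^ k) F) \<theta>
      = Pm n t ((m(j := m j + k))(j := Suc ((m(j := m j + k)) j))) \<theta>"
    by (rule step[OF j Suc.IH])
  moreover have "(m(j := m j + k))(j := Suc ((m(j := m j + k)) j)) = m(j := m j + Suc k)" by simp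
  ultimately show ?case by (simp only: funpow.simps o_apply)
qed

lemma foldr_step:
  assumes "distinct js" "set js \<subseteq> {..<n}" and F: "\<forall>\<theta>\<in>Sd n t. F \<theta> = Pm n t m \<theta>"
  shows "\<forall>\<theta>\<in>Sd n t. foldr (\<lambda>j g. ((\<lambda>h \<theta>. - \<i> * partial j h \<theta>) ^^ (r j)) g) js F \<theta>
     = Pm n t (\<lambda>i. m i + (if i \<in> set js then r i else 0)) \<theta>"
  using assms(1,2)
proof (induction js)
  case Nil
  then show ?case using F by simp
next
  case (Cons a js)
  have IH: "\<forall>\<theta>\<in>Sd n t. foldr (\<lambda>j g. ((\<lambda>h \<theta>. - \<i> * partial j h \<theta>) ^^ (r j)) g) js F \<theta>
     = Pm n t (\<lambda>i. m i + (if i \<in> set js then r i else 0)) \<theta>" using Cons by auto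
  have a: "a < n" using Cons by auto
  have "(\<lambda>i. m i + (if i \<in> set js then r i else 0))(a := (\<lambda>i. m i + (if i \<in> set js then r i else 0)) a + r a)
     = (\<lambda>i. m i + (if i \<in> set (a # js) then r i else 0))"
    using Cons.prems by (auto simp: fun_eq_iff)
  with stepk[OF a IH, of "r a"] show ?case by simp
qed

lemma Gfun_Pm: "Gfun n t \<theta> = Pm n t (\<lambda>_. 0) \<theta>"
proof -
  have "exp (\<i> * complex_of_real (t / 2 * (\<Sum>j<n. \<theta> j))) = (\<Prod>j<n. exp (\<i> * complex_of_real (t * \<theta> j) / 2))"
    by (simp add: exp_sum[symmetric] sum_distrib_left sum_divide_distrib)
  then show ?thesis
    unfolding Gfun_def Pm_def Phi_def by (simp add: prod_dividef)
qed

lemma Dpow_eq: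
  assumes "\<theta> \<in> Sd n t"
  shows "Dpow n r (Gfun n t) \<theta> = Pm n t r \<theta>"
proof -
  have "\<forall>\<theta>\<in>Sd n t. Dpow n r (Gfun n t) \<theta> = Pm n t (\<lambda>i. 0 + (if i \<in> set [0..<n] then r i else 0)) \<theta>"
    unfolding Dpow_def by (rule foldr_step) (auto simp: Gfun_Pm)
  moreover have "Pm n t (\<lambda>i. 0 + (if i \<in> set [0..<n] then r i else 0)) \<theta> = Pm n t r \<theta>"
    unfolding Pm_def by (intro prod.cong) auto
  ultimately show ?thesis using assms by simp
qed

lemma fterm_eq:
  assumes "t \<noteq> 0" "u \<in> Sd n t"
  shows "fterm n u r t = (\<Prod>j<n. (- \<i>) ^ r j * Phi (r j) (complex_of_real (t * u j)))"
proof -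
  have "(1 / complex_of_real t) ^ mabs n r = (\<Prod>j<n. (1 / complex_of_real t) ^ r j)"
    unfolding mabs_def by (simp add: power_sum)
  then have "fterm n u r t = (\<Prod>j<n. (1 / complex_of_real t) ^ r j * ((- \<i>) ^ r j * complex_of_real t ^ r j * Phi (r j) (complex_of_real (t * u j))))"
    unfolding fterm_def Dpow_eq[OF assms(2)] Pm_def by (simp add: prod.distrib)
  also have "\<dots> = (\<Prod>j<n. (- \<i>) ^ r j * Phi (r j) (complex_of_real (t * u j)))"
    using assms(1) by (intro prod.cong) (auto simp: power_divide field_simps)
  finally show ?thesis .
qed


lemma Qp_one: "poly (Qp k) 1 = \<i> ^ k * of_nat (fact k)"
  by (induction k) (simp_all add: algebra_simps)

lemma exp_ne_1_small:
  assumes "0 < y" "y < 2 * pi"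
  shows "exp (\<i> * complex_of_real y) \<noteq> 1"
proof
  assume "exp (\<i> * complex_of_real y) = 1"
  then obtain m :: int where "y = of_int (2 * m) * pi"
    unfolding exp_eq_1 by auto
  then have "y = 2 * pi * m" by simp
  with assms have "0 < m" "m < 1" by (auto simp: mult_less_cancel_left1 zero_less_mult_iff)
  then show False by simp
qed

lemma lead_zero:
  fixes e :: "nat \<Rightarrow> complex"
  assumes H: "\<And>y. exp (\<i> * complex_of_real y) \<noteq> 1 \<Longrightarrow> (\<Sum>k\<le>N. e k * Phi k (complex_of_real y)) = 0"
  shows "e N = 0"
proof -
  define Pn where "Pn = (\<Sum>k\<le>N. smult (e k) (Qp k * [:1,-1:] ^ (N - k)))"
  define f where "f = (\<lambda>y::real. poly Pn (exp (\<i> * complex_of_real y)))"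
  have fz: "f y = 0" if y: "exp (\<i> * complex_of_real y) \<noteq> 1" for y
  proof -
    define w where "w = exp (\<i> * complex_of_real y)"
    define E where "E = exp (\<i> * complex_of_real y / 2)"
    have D: "1 - w \<noteq> 0" using y w_def by auto
    have E: "E \<noteq> 0" unfolding E_def by simp
    have "f y = (\<Sum>k\<le>N. e k * poly (Qp k) w * (1 - w) ^ (N - k))"
      unfolding f_def Pn_def w_def by (simp add: poly_sum mult.assoc)
    also have "\<dots> = (\<Sum>k\<le>N. (1 - w) ^ Suc N / E * (e k * Phi k (complex_of_real y)))"
    proof (intro sum.cong refl)
      fix k assume "k \<in> {..N}"
      then have "(1 - w) ^ Suc N = (1 - w) ^ Suc k * (1 - w) ^ (N - k)"
        by (simp flip: power_add)
      moreover have gen: "e * q * b = (a * b) / E * (e * (E * q / a))" if "a \<noteq> 0" "E \<noteq> 0" for a b e q E :: complex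
        using that by (simp add: field_simps)
      ultimately show "e k * poly (Qp k) w * (1 - w) ^ (N - k) = (1 - w) ^ Suc N / E * (e k * Phi k (complex_of_real y))"
        unfolding Phi_def w_def[symmetric] E_def[symmetric] using D E gen[of "(1 - w) ^ Suc k" E] by simp
    qed
    also have "\<dots> = (1 - w) ^ Suc N / E * (\<Sum>k\<le>N. e k * Phi k (complex_of_real y))"
      by (simp add: sum_distrib_left)
    also have "\<dots> = 0" using H[OF y] by simp
    finally show ?thesis .
  qed
  have cont: "continuous_on UNIV f" unfolding f_def by (auto intro!: continuous_intros)
  have t1: "(f \<longlongrightarrow> f 0) (at_right 0)"
    using cont by (metis continuous_on_def UNIV_I tendsto_within_subset subset_UNIV at_within_open open_UNIV)
  have ev: "eventually (\<lambda>y. f y = 0) (at_right (0::real))"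
  proof -
    have "\<forall>y>0. y < 2 * pi \<longrightarrow> f y = 0" using fz exp_ne_1_small by blast
    then show ?thesis unfolding eventually_at_right_field using pi_gt_zero
      by (intro exI[of _ "2*pi"]) simp
  qed
  have t2: "(f \<longlongrightarrow> 0) (at_right 0)"
    by (rule tendsto_eventually) (rule ev)
  have f0: "f 0 = 0" using tendsto_unique[OF _ t1 t2] by simp
  have "f 0 = (\<Sum>k\<le>N. e k * poly (Qp k) 1 * 0 ^ (N - k))"
    unfolding f_def Pn_def by (simp add: poly_sum mult.assoc)
  also have "\<dots> = e N * poly (Qp N) 1"
  proof -
    define g where "g k = e k * poly (Qp k) 1 * 0 ^ (N - k)" for k
    have "sum g {..N} = g N + sum g ({..N}-{N})" by (rule sum.remove) auto
    moreover have "sum g ({..N}-{N}) = 0" unfolding g_def by (intro sum.neutral) auto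
    moreover have "g N = e N * poly (Qp N) 1" unfolding g_def by simp
    ultimately have "sum g {..N} = e N * poly (Qp N) 1" by simp
    then show ?thesis unfolding g_def .
  qed
  finally have "e N * poly (Qp N) 1 = 0" using f0 by simp
  moreover have "poly (Qp N) 1 \<noteq> 0" unfolding Qp_one by simp
  ultimately show ?thesis by simp
qed

lemma all_zero_upto:
  fixes e :: "nat \<Rightarrow> complex"
  assumes "\<And>y. exp (\<i> * complex_of_real y) \<noteq> 1 \<Longrightarrow> (\<Sum>k\<le>N. e k * Phi k (complex_of_real y)) = 0"
  shows "\<forall>k\<le>N. e k = 0"
  using assms
proof (induction N)
  case 0
  have "e 0 = 0" by (rule lead_zero[where N=0 and e=e]) (rule "0.prems")
  then show ?case by simp
next
  case (Suc N)
  have eN: "e (Suc N) = 0" by (rule lead_zero[where N="Suc N" and e=e]) (rule Suc.prems)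
  have "(\<Sum>k\<le>N. e k * Phi k (complex_of_real y)) = 0" if "exp (\<i> * complex_of_real y) \<noteq> 1" for y
    using Suc.prems[OF that] eN by simp
  then have "\<forall>k\<le>N. e k = 0" by (rule Suc.IH)
  with eN show ?case using le_Suc_eq by blast
qed

lemma all_zero_fin:
  fixes e :: "nat \<Rightarrow> complex"
  assumes K: "finite K"
    and H: "\<And>y. exp (\<i> * complex_of_real y) \<noteq> 1 \<Longrightarrow> (\<Sum>k\<in>K. e k * Phi k (complex_of_real y)) = 0"
  shows "\<forall>k\<in>K. e k = 0"
proof -
  define N where "N = Max (insert 0 K)"
  have KN: "K \<subseteq> {..N}" unfolding N_def using K by (simp add: subset_iff)
  define e' where "e' = (\<lambda>k. if k \<in> K then e k else 0)"
  have Z: "(\<Sum>k\<le>N. e' k * Phi k (complex_of_real y)) = 0" if y: "exp (\<i> * complex_of_real y) \<noteq> 1" for y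
  proof -
    have "(\<Sum>k\<le>N. e' k * Phi k (complex_of_real y)) = (\<Sum>k\<le>N. if k \<in> K then e k * Phi k (complex_of_real y) else 0)"
      unfolding e'_def by (intro sum.cong) auto
    also have "\<dots> = (\<Sum>k\<in>{..N} \<inter> K. e k * Phi k (complex_of_real y))"
      by (rule sum.inter_restrict[symmetric]) simp
    also have "{..N} \<inter> K = K" using KN by auto
    finally show ?thesis using H[OF y] by simp
  qed
  have "\<forall>k\<le>N. e' k = 0" by (rule all_zero_upto) (rule Z)
  then show ?thesis using KN unfolding e'_def by (metis atMost_iff subsetD)
qed


definition good :: "nat \<Rightarrow> (nat \<Rightarrow> real) \<Rightarrow> bool" where
  "good n x \<longleftrightarrow> (\<forall>j<n. exp (\<i> * complex_of_real (x j)) \<noteq> 1)"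

lemma sep:
  "\<forall>R D. finite R \<longrightarrow> R \<subseteq> multi_indices n \<longrightarrow>
     (\<forall>x. good n x \<longrightarrow> (\<Sum>r\<in>R. D r * (\<Prod>j<n. Phi (r j) (complex_of_real (x j)))) = 0) \<longrightarrow>
     (\<forall>r\<in>R. D r = (0::complex))"
proof (induction n)
  case 0
  show ?case
  proof (intro allI impI ballI)
    fix R D r
    assume fin: "finite R" and sub: "R \<subseteq> multi_indices 0"
      and H: "\<forall>x. good 0 x \<longrightarrow> (\<Sum>r\<in>R. D r * (\<Prod>j<0. Phi (r j) (complex_of_real (x j)))) = 0"
      and r: "r \<in> R"
    have "R \<subseteq> {\<lambda>_. 0}" using sub unfolding multi_indices_def by auto
    then have R: "R = {r}" using r by auto
    show "D r = 0" using H R by (simp add: good_def)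
  qed
next
  case (Suc n)
  show ?case
  proof (intro allI impI ballI)
    fix R D r0
    assume fin: "finite R" and sub: "R \<subseteq> multi_indices (Suc n)"
      and H: "\<forall>x. good (Suc n) x \<longrightarrow> (\<Sum>r\<in>R. D r * (\<Prod>j<Suc n. Phi (r j) (complex_of_real (x j)))) = 0"
      and r0: "r0 \<in> R"
    define K where "K = (\<lambda>r. r n) ` R"
    have finK: "finite K" unfolding K_def using fin by simp
    define E where "E x k = (\<Sum>r\<in>{r\<in>R. r n = k}. D r * (\<Prod>j<n. Phi (r j) (complex_of_real (x j))))" for x k
    have Ez: "E x k = 0" if x: "good n x" and k: "k \<in> K" for x k
    proof -
      have "(\<Sum>k\<in>K. E x k * Phi k (complex_of_real y)) = 0" if y: "exp (\<i> * complex_of_real y) \<noteq> 1" for y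
      proof -
        have g: "good (Suc n) (x(n := y))" using x y unfolding good_def by (auto simp: less_Suc_eq)
        have "(\<Sum>k\<in>K. E x k * Phi k (complex_of_real y))
            = (\<Sum>k\<in>K. \<Sum>r\<in>{r\<in>R. r n = k}. D r * (\<Prod>j<Suc n. Phi (r j) (complex_of_real ((x(n := y)) j))))"
        proof (intro sum.cong refl)
          fix k assume "k \<in> K"
          show "E x k * Phi k (complex_of_real y) = (\<Sum>r\<in>{r\<in>R. r n = k}. D r * (\<Prod>j<Suc n. Phi (r j) (complex_of_real ((x(n := y)) j))))"
            unfolding E_def sum_distrib_right
          proof (intro sum.cong refl)
            fix r assume "r \<in> {r\<in>R. r n = k}"
            then have rn: "r n = k" by simp
            have "(\<Prod>j<n. Phi (r j) (complex_of_real ((x(n := y)) j))) = (\<Prod>j<n. Phi (r j) (complex_of_real (x j)))"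
              by (intro prod.cong) auto
            then show "D r * (\<Prod>j<n. Phi (r j) (complex_of_real (x j))) * Phi k (complex_of_real y) =
                D r * (\<Prod>j<Suc n. Phi (r j) (complex_of_real ((x(n := y)) j)))"
              by (simp add: rn mult_ac)
          qed
        qed
        also have "\<dots> = (\<Sum>r\<in>R. D r * (\<Prod>j<Suc n. Phi (r j) (complex_of_real ((x(n := y)) j))))"
          by (rule sum.group[OF fin finK]) (simp add: K_def)
        also have "\<dots> = 0" using H g by blast
        finally show ?thesis .
      qed
      then show ?thesis using all_zero_fin[OF finK, of "E x"] k by blast
    qed
    define k where "k = r0 n"
    have k: "k \<in> K" unfolding K_def k_def using r0 by auto
    define Rk where "Rk = {r\<in>R. r n = k}"
    define R' where "R' = (\<lambda>r. r(n := 0)) ` Rk"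
    define D' where "D' r' = D (r'(n := k))" for r'
    have inj: "inj_on (\<lambda>r. r(n := 0)) Rk"
    proof (rule inj_onI)
      fix a b assume "a \<in> Rk" "b \<in> Rk" "a(n := 0) = b(n := 0)"
      then have "(a(n := 0))(n := k) = (b(n := 0))(n := k)" "a n = k" "b n = k" unfolding Rk_def by auto
      then show "a = b" by (metis fun_upd_triv fun_upd_upd)
    qed
    have finR': "finite R'" unfolding R'_def Rk_def using fin by simp
    have subR': "R' \<subseteq> multi_indices n"
      using sub unfolding R'_def Rk_def multi_indices_def by auto
    have HR': "\<forall>x. good n x \<longrightarrow> (\<Sum>r\<in>R'. D' r * (\<Prod>j<n. Phi (r j) (complex_of_real (x j)))) = 0"
    proof (intro allI impI)
      fix x assume x: "good n x"
      have "(\<Sum>r\<in>R'. D' r * (\<Prod>j<n. Phi (r j) (complex_of_real (x j))))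
          = (\<Sum>r\<in>Rk. D' (r(n := 0)) * (\<Prod>j<n. Phi ((r(n := 0)) j) (complex_of_real (x j))))"
        unfolding R'_def by (rule sum.reindex[OF inj, unfolded o_def])
      also have "\<dots> = E x k"
        unfolding E_def Rk_def
      proof (intro sum.cong refl)
        fix r assume "r \<in> {r \<in> R. r n = k}"
        then have rn: "r n = k" by simp
        have "(\<Prod>j<n. Phi ((r(n := 0)) j) (complex_of_real (x j))) = (\<Prod>j<n. Phi (r j) (complex_of_real (x j)))"
          by (intro prod.cong) auto
        moreover have "(r(n := 0))(n := k) = r" using rn by auto
        ultimately show "D' (r(n := 0)) * (\<Prod>j<n. Phi ((r(n := 0)) j) (complex_of_real (x j))) =
            D r * (\<Prod>j<n. Phi (r j) (complex_of_real (x j)))" unfolding D'_def by simp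
      qed
      also have "\<dots> = 0" using Ez[OF x k] .
      finally show "(\<Sum>r\<in>R'. D' r * (\<Prod>j<n. Phi (r j) (complex_of_real (x j)))) = 0" .
    qed
    have "r0(n := 0) \<in> R'" unfolding R'_def Rk_def k_def using r0 by auto
    then have "D' (r0(n := 0)) = 0" using Suc.IH finR' subR' HR' by blast
    moreover have "(r0(n := 0))(n := k) = r0" unfolding k_def by auto
    ultimately show "D r0 = 0" unfolding D'_def by simp
  qed
qed


lemma Phi_period:
  "Phi k (complex_of_real (s - 4 * pi * of_int h)) = Phi k (complex_of_real s)"
proof -
  have a: "\<i> * complex_of_real (s - 4 * pi * of_int h) / 2 = \<i> * complex_of_real s / 2 + \<i> * (of_int (- h) * (of_real pi * 2))"
    by (simp add: field_simps)
  have b: "\<i> * complex_of_real (s - 4 * pi * of_int h) = \<i> * complex_of_real s + \<i> * (of_int (- 2 * h) * (of_real pi * 2))"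
    by (simp add: algebra_simps)
  show ?thesis unfolding Phi_def a exp_plus_2pin unfolding b exp_plus_2pin ..
qed

lemma exp_period:
  "exp (\<i> * complex_of_real (s - 4 * pi * of_int h)) = exp (\<i> * complex_of_real s)"
proof -
  have b: "\<i> * complex_of_real (s - 4 * pi * of_int h) = \<i> * complex_of_real s + \<i> * (of_int (- 2 * h) * (of_real pi * 2))"
    by (simp add: algebra_simps)
  show ?thesis unfolding b exp_plus_2pin ..
qed

lemma kron_indep:
  assumes ind: "rat_lin_indep n u"
  defines "\<theta> \<equiv> (\<lambda>j. u j / (4 * pi))"
  shows "module.independent (\<lambda>r. (*) (real_of_int r)) (\<theta> ` {..<n})" and "inj_on \<theta> {..<n}"
proof -
  interpret Modules.module "(\<lambda>r. (*) (real_of_int r))"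
    by (simp add: Modules.module.intro distrib_left mult.commute)
  show "inj_on \<theta> {..<n}"
  proof (rule inj_onI, rule ccontr)
    fix a b assume a: "a \<in> {..<n}" and b: "b \<in> {..<n}" and eq: "\<theta> a = \<theta> b" and ne: "a \<noteq> b"
    define q :: "nat \<Rightarrow> rat" where "q j = (if j = a then 1 else if j = b then -1 else 0)" for j
    have "(\<Sum>j<n. real_of_rat (q j) * u j) = (\<Sum>j\<in>{a,b}. real_of_rat (q j) * u j)"
      by (rule sum.mono_neutral_right) (use a b in \<open>auto simp: q_def\<close>)
    also have "\<dots> = u a - u b" using ne by (simp add: q_def)
    also have "\<dots> = 0" using eq unfolding \<theta>_def by (simp add: divide_simps)
    finally have "q a = 0" using ind a unfolding rat_lin_indep_def by blast
    then show False by (simp add: q_def)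
  qed
  then have inj: "inj_on \<theta> {..<n}" .
  show "independent (\<theta> ` {..<n})"
    unfolding independent_explicit_module
  proof (intro allI impI)
    fix t and c :: "real \<Rightarrow> int" and v
    assume ft: "finite t" and tsub: "t \<subseteq> \<theta> ` {..<n}" and sum0: "(\<Sum>v\<in>t. real_of_int (c v) * v) = 0" and v: "v \<in> t"
    define J where "J = {j\<in>{..<n}. \<theta> j \<in> t}"
    have tJ: "t = \<theta> ` J" unfolding J_def using tsub by auto
    have injJ: "inj_on \<theta> J" using inj unfolding J_def by (auto intro: inj_on_subset)
    define q :: "nat \<Rightarrow> rat" where "q j = (if j \<in> J then of_int (c (\<theta> j)) else 0)" for j
    have "(\<Sum>j<n. real_of_rat (q j) * u j) = (\<Sum>j\<in>J. real_of_rat (q j) * u j)"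
      by (rule sum.mono_neutral_right) (auto simp: q_def J_def)
    also have "\<dots> = (\<Sum>j\<in>J. 4 * pi * (real_of_int (c (\<theta> j)) * \<theta> j))"
      by (intro sum.cong refl) (simp add: q_def \<theta>_def)
    also have "\<dots> = 4 * pi * (\<Sum>v\<in>t. real_of_int (c v) * v)"
      unfolding tJ sum_distrib_left[symmetric] by (simp add: sum.reindex[OF injJ])
    also have "\<dots> = 0" using sum0 by simp
    finally have allq: "\<forall>j<n. q j = 0" using ind unfolding rat_lin_indep_def by blast
    obtain j where j: "j \<in> J" "v = \<theta> j" using v tJ by auto
    then have "j < n" unfolding J_def by auto
    then have "q j = 0" using allq by simp
    then show "c v = 0" using j by (simp add: q_def)
  qed
qed


lemma dense_vanish:
  fixes D :: "(nat \<Rightarrow> nat) \<Rightarrow> complex"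
  assumes n: "0 < n" and ind: "rat_lin_indep n u"
    and H: "\<forall>t\<in>tdom n u. (\<Sum>r\<in>R. D r * (\<Prod>j<n. Phi (r j) (complex_of_real (t * u j)))) = 0"
    and x: "good n x"
  shows "(\<Sum>r\<in>R. D r * (\<Prod>j<n. Phi (r j) (complex_of_real (x j)))) = 0"
proof -
  define \<theta> where "\<theta> = (\<lambda>j. u j / (4 * pi))"
  define \<alpha> where "\<alpha> = (\<lambda>j. x j / (4 * pi))"
  have "\<exists>t h. \<forall>i<n. \<bar>t * \<theta> i - of_int (h i) - \<alpha> i\<bar> < 1 / real (Suc N)" for N
  proof -
    have e: "(0::real) < 1 / real (Suc N)" by simp
    obtain t h where "\<And>i. i < n \<Longrightarrow> \<bar>t * \<theta> i - of_int (h i) - \<alpha> i\<bar> < 1 / real (Suc N)"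
      using Kronecker_thm_1[OF kron_indep[OF ind, folded \<theta>_def] e] by metis
    then show ?thesis by blast
  qed
  then obtain T hh where Th: "\<And>N i. i < n \<Longrightarrow> \<bar>T N * \<theta> i - of_int (hh N i) - \<alpha> i\<bar> < 1 / real (Suc N)"
    by metis
  define y where "y N i = T N * u i - 4 * pi * of_int (hh N i)" for N i
  have yconv: "(\<lambda>N. y N i) \<longlonglongrightarrow> x i" if i: "i < n" for i
  proof -
    have b: "\<bar>y N i - x i\<bar> \<le> 4 * pi * (1 / real (Suc N))" for N
    proof -
      have "y N i - x i = 4 * pi * (T N * \<theta> i - of_int (hh N i) - \<alpha> i)"
        unfolding y_def \<theta>_def \<alpha>_def by (simp add: field_simps)
      then have "\<bar>y N i - x i\<bar> = 4 * pi * \<bar>T N * \<theta> i - of_int (hh N i) - \<alpha> i\<bar>"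
        by (simp add: abs_mult)
      moreover have "\<bar>T N * \<theta> i - of_int (hh N i) - \<alpha> i\<bar> \<le> 1 / real (Suc N)"
        using Th[OF i, of N] by (rule less_imp_le)
      ultimately show ?thesis using mult_left_mono[of _ _ "4 * pi"] by (metis pi_ge_zero mult_nonneg_nonneg zero_le_numeral)

    qed
    have z: "(\<lambda>N. 4 * pi * (1 / real (Suc N))) \<longlonglongrightarrow> 4 * pi * 0"
      using tendsto_mult[OF tendsto_const[of "4 * pi"] LIMSEQ_inverse_real_of_nat] by (simp add: inverse_eq_divide)
    have "(\<lambda>N. y N i - x i) \<longlonglongrightarrow> 0"
      by (rule Lim_null_comparison[OF _ z[simplified]]) (use b in \<open>auto intro: always_eventually\<close>)
    then show ?thesis by (simp add: LIM_zero_iff)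
  qed
  define A where "A z = (\<Sum>r\<in>R. D r * (\<Prod>j<n. Phi (r j) (complex_of_real (z j))))" for z
  have cont: "(\<lambda>N. A (y N)) \<longlonglongrightarrow> A x"
    unfolding A_def
  proof (intro tendsto_sum tendsto_mult tendsto_const tendsto_prod)
    fix r j assume j: "j \<in> {..<n}"
    have "isCont (Phi (r j)) (complex_of_real (x j))"
      using x j unfolding good_def by (intro DERIV_isCont[OF Phi_deriv]) auto
    then show "(\<lambda>N. Phi (r j) (complex_of_real (y N j))) \<longlonglongrightarrow> Phi (r j) (complex_of_real (x j))"
      using yconv j by (intro isCont_tendsto_compose[where g="Phi (r j)"] tendsto_of_real) auto
  qed
  have ev1: "eventually (\<lambda>N. \<forall>j\<in>{..<n}. exp (\<i> * complex_of_real (y N j)) \<noteq> 1) sequentially"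
  proof (rule eventually_ball_finite[OF finite_lessThan], rule ballI)
    fix j assume j: "j \<in> {..<n}"
    have "(\<lambda>N. exp (\<i> * complex_of_real (y N j))) \<longlonglongrightarrow> exp (\<i> * complex_of_real (x j))"
      using yconv j by (intro tendsto_intros) auto
    moreover have "exp (\<i> * complex_of_real (x j)) \<noteq> 1" using x j unfolding good_def by auto
    ultimately show "eventually (\<lambda>N. exp (\<i> * complex_of_real (y N j)) \<noteq> 1) sequentially"
      by (rule tendsto_imp_eventually_ne)
  qed
  have ev: "eventually (\<lambda>N. good n (y N)) sequentially"
    using ev1 by (rule eventually_mono) (simp add: good_def)
  have ev0: "eventually (\<lambda>N. A (y N) = 0) sequentially"
    using ev
  proof eventually_elim
    case (elim N)
    have ex: "exp (\<i> * complex_of_real (T N * u j)) \<noteq> 1" if "j < n" for j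
      using elim that exp_period[of "T N * u j" "hh N j"] unfolding good_def y_def by auto
    have "T N \<noteq> 0" using ex[OF n] by auto
    then have "T N \<in> tdom n u" using ex unfolding tdom_def by auto
    then have "(\<Sum>r\<in>R. D r * (\<Prod>j<n. Phi (r j) (complex_of_real (T N * u j)))) = 0" using H by blast
    moreover have "A (y N) = (\<Sum>r\<in>R. D r * (\<Prod>j<n. Phi (r j) (complex_of_real (T N * u j))))"
      unfolding A_def y_def Phi_period ..
    ultimately show ?case by simp
  qed
  have "(\<lambda>N. A (y N)) \<longlonglongrightarrow> 0" by (rule tendsto_eventually[OF ev0])
  with cont have "A x = 0" using LIMSEQ_unique by blast
  then show ?thesis unfolding A_def .
qed

theorem theorem3:
  fixes n :: nat and u :: "nat \<Rightarrow> real" and c c' :: "(nat \<Rightarrow> nat) \<Rightarrow> nat \<Rightarrow> real" and l :: nat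
  assumes "\<forall>j<n. u j > 0"
    and "rat_lin_indep n u"
    and "\<forall>s\<le>l. \<forall>t\<in>tdom n u. Vcoef n u c s t = Vcoef n u c' s t"
  shows "\<forall>r\<in>multi_indices n. 1 \<le> mabs n r \<longrightarrow>
           (\<forall>i. mabs n r - 1 + i \<le> l \<longrightarrow> c r i = c' r i)"
proof (intro ballI impI allI)
  fix r0 i
  assume r0: "r0 \<in> multi_indices n" and r01: "1 \<le> mabs n r0" and il: "mabs n r0 - 1 + i \<le> l"
  have n: "0 < n"
  proof (rule ccontr)
    assume "\<not> 0 < n"
    then have "n = 0" by simp
    then show False using r01 by (simp add: mabs_def)
  qed
  define s where "s = mabs n r0 - 1 + i"
  define R where "R = {r\<in>multi_indices n. 1 \<le> mabs n r \<and> mabs n r \<le> s + 1}"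
  have le: "r j \<le> mabs n r" if "j < n" for r j
    unfolding mabs_def using that by (intro member_le_sum) auto
  have "R \<subseteq> {f. \<forall>x. (x \<in> {..<n} \<longrightarrow> f x \<in> {..s+1}) \<and> (x \<notin> {..<n} \<longrightarrow> f x = 0)}"
    unfolding R_def multi_indices_def using le by (auto intro: order_trans)
  moreover have "finite {f. \<forall>x. (x \<in> {..<n} \<longrightarrow> f x \<in> {..s+1}) \<and> (x \<notin> {..<n} \<longrightarrow> (f x :: nat) = 0)}"
    by (rule finite_set_of_finite_funs) auto
  ultimately have finR: "finite R" by (rule finite_subset)
  have subR: "R \<subseteq> multi_indices n" unfolding R_def by auto
  define D where "D r = complex_of_real (c r (s + 1 - mabs n r) - c' r (s + 1 - mabs n r)) * (\<Prod>j<n. (- \<i>) ^ r j)" for r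
  have H: "\<forall>t\<in>tdom n u. (\<Sum>r\<in>R. D r * (\<Prod>j<n. Phi (r j) (complex_of_real (t * u j)))) = 0"
  proof
    fix t assume t: "t \<in> tdom n u"
    have t0: "t \<noteq> 0" and uS: "u \<in> Sd n t" using t unfolding tdom_def Sd_def by auto
    have "s \<le> l" using il s_def by simp
    then have "Vcoef n u c s t = Vcoef n u c' s t" using assms(3) t by blast
    then have "0 = Vcoef n u c s t - Vcoef n u c' s t" by simp
    also have "\<dots> = (\<Sum>r\<in>R. complex_of_real (c r (s + 1 - mabs n r) - c' r (s + 1 - mabs n r)) * fterm n u r t)"
      unfolding Vcoef_def R_def by (simp add: sum_subtractf[symmetric] algebra_simps)
    also have "\<dots> = (\<Sum>r\<in>R. D r * (\<Prod>j<n. Phi (r j) (complex_of_real (t * u j))))"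
      unfolding D_def fterm_eq[OF t0 uS] by (simp add: prod.distrib mult_ac)
    finally show "(\<Sum>r\<in>R. D r * (\<Prod>j<n. Phi (r j) (complex_of_real (t * u j)))) = 0" by simp
  qed
  have "\<forall>x. good n x \<longrightarrow> (\<Sum>r\<in>R. D r * (\<Prod>j<n. Phi (r j) (complex_of_real (x j)))) = 0"
    using dense_vanish[OF n assms(2) H] by blast
  then have Dz: "\<forall>r\<in>R. D r = 0" using sep finR subR by blast
  have "r0 \<in> R" unfolding R_def s_def using r0 r01 by auto
  then have "D r0 = 0" using Dz by blast
  moreover have "(\<Prod>j<n. (- \<i>) ^ r0 j) \<noteq> (0::complex)" by simp
  ultimately have "c r0 (s + 1 - mabs n r0) = c' r0 (s + 1 - mabs n r0)" unfolding D_def by simp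
  moreover have "s + 1 - mabs n r0 = i" unfolding s_def using r01 by simp
  ultimately show "c r0 i = c' r0 i" by simp
qed

end
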